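(* Consider a finite set of time periods $\mathcal{T}$ and a finite set of user types $\mathcal{K}=\{1,\dots,K\}$, where type $k$ has aggregate demand $D_k^t\ge 0$ and value of lost load $V_k^t$ in period $t$, with $V_1^t\le\cdots\le V_K^t$. Let $D_a^t=\sum_kD_k^t>0$. For capacity $r\ge0$ and random variables $\Theta^t$ supported in $[0,1]$, let $s^t=\min(D_a^t,r\Theta^t)$, $d_k^t=\frac{D_k^t}{D_a^t}s^t$, $C_s^t(r,\Theta^t)=\sum_k(V_k^t-p)(D_k^t-d_k^t)$. Fix $p$ with $p\le V_1^t$ for all $t$, $c_r>0$, $\xi\ge0$. Let $f^{\mathrm{No}}(r)=\sum_tp\,\mathbb{E}[s^t]-c_rr$ and $f^{\mathrm{Ins}}(r,\pi)=\sum_k\sum_t\pi_k^tD_k^t+\sum_tp\,\mathbb{E}[s^t]-c_rr-\sum_t\mathbb{E}[C_s^t(r,\Theta^t)]$, and define the social cost $C^{\mathrm{SO}}(r)=c_rr+\sum_t\mathbb{E}[C_s^t(r,\Theta^t)]$. Let $(r^*,\pi^* )$ be the optimal solution of Problem-Ins: minimize $\sum_k\sum_t\pi_k^tD_k^t$ over $r\ge0,\pi$ subject to $f^{\mathrm{Ins}}(r,\pi)\ge\xi$, $\pi_k^t-\pi_m^t=(V_k^t-V_m^t)\mathbb{E}[1-s^t/D_a^t]$ for all $t,m,k$, and $0\le\pi_k^t\le(V_k^t-p)\mathbb{E}[1-s^t/D_a^t]$ for all $t,k$. Let $r^\ddagger$ be the optimal solution of Problem-NoIns: maximize $r\ge0$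 subject to $f^{\mathrm{No}}(r)\ge\xi$. Then $C^{\mathrm{SO}}(r^* )\le C^{\mathrm{SO}}(r^\ddagger)$, i.e., the optimal social cost under the insurance-providing utility is no larger than under the no-insurance utility.
   Context: Expectations are over $\Theta^t$. The problems are assumed feasible with optimal solutions as described. *)

theory Defs
  imports "HOL-Probability.Probability"
begin

text \<open>User types are indexed by {1..K}; D k t is aggregate demand, V k t value of lost load.
  Theta t is the random variable of period t on the probability space M.\<close>

definition Dagg :: "nat \<Rightarrow> (nat \<Rightarrow> 't \<Rightarrow> real) \<Rightarrow> 't \<Rightarrow> real" where
  "Dagg K D t = (\<Sum>k=1..K. D k t)"

definition supp :: "nat \<Rightarrow> (nat \<Rightarrow> 't \<Rightarrow> real) \<Rightarrow> real \<Rightarrow> 't \<Rightarrow> real \<Rightarrow> real" where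
  "supp K D r t th = min (Dagg K D t) (r * th)"

definition Cs :: "nat \<Rightarrow> (nat \<Rightarrow> 't \<Rightarrow> real) \<Rightarrow> (nat \<Rightarrow> 't \<Rightarrow> real) \<Rightarrow> real \<Rightarrow> real \<Rightarrow> 't \<Rightarrow> real \<Rightarrow> real" where
  "Cs K D V p r t th =
     (\<Sum>k=1..K. (V k t - p) * (D k t - D k t / Dagg K D t * supp K D r t th))"

definition fNo :: "'a measure \<Rightarrow> 't set \<Rightarrow> ('t \<Rightarrow> 'a \<Rightarrow> real) \<Rightarrow> nat \<Rightarrow> (nat \<Rightarrow> 't \<Rightarrow> real)
    \<Rightarrow> real \<Rightarrow> real \<Rightarrow> real \<Rightarrow> real" where
  "fNo M T Theta K D p cr r =
     (\<Sum>t\<in>T. p * (\<integral>\<omega>. supp K D r t (Theta t \<omega>) \<partial>M)) - cr * r"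

definition insObj :: "'t set \<Rightarrow> nat \<Rightarrow> (nat \<Rightarrow> 't \<Rightarrow> real) \<Rightarrow> (nat \<Rightarrow> 't \<Rightarrow> real) \<Rightarrow> real" where
  "insObj T K D \<pi> = (\<Sum>k=1..K. \<Sum>t\<in>T. \<pi> k t * D k t)"

definition fIns :: "'a measure \<Rightarrow> 't set \<Rightarrow> ('t \<Rightarrow> 'a \<Rightarrow> real) \<Rightarrow> nat \<Rightarrow> (nat \<Rightarrow> 't \<Rightarrow> real)
    \<Rightarrow> (nat \<Rightarrow> 't \<Rightarrow> real) \<Rightarrow> real \<Rightarrow> real \<Rightarrow> real \<Rightarrow> (nat \<Rightarrow> 't \<Rightarrow> real) \<Rightarrow> real" where
  "fIns M T Theta K D V p cr r \<pi> =
     insObj T K D \<pi> + (\<Sum>t\<in>T. p * (\<integral>\<omega>. supp K D r t (Theta t \<omega>) \<partial>M)) - cr * r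
     - (\<Sum>t\<in>T. (\<integral>\<omega>. Cs K D V p r t (Theta t \<omega>) \<partial>M))"

definition CSO :: "'a measure \<Rightarrow> 't set \<Rightarrow> ('t \<Rightarrow> 'a \<Rightarrow> real) \<Rightarrow> nat \<Rightarrow> (nat \<Rightarrow> 't \<Rightarrow> real)
    \<Rightarrow> (nat \<Rightarrow> 't \<Rightarrow> real) \<Rightarrow> real \<Rightarrow> real \<Rightarrow> real \<Rightarrow> real" where
  "CSO M T Theta K D V p cr r = cr * r + (\<Sum>t\<in>T. (\<integral>\<omega>. Cs K D V p r t (Theta t \<omega>) \<partial>M))"

definition unserved :: "'a measure \<Rightarrow> ('t \<Rightarrow> 'a \<Rightarrow> real) \<Rightarrow> nat \<Rightarrow> (nat \<Rightarrow> 't \<Rightarrow> real)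
    \<Rightarrow> real \<Rightarrow> 't \<Rightarrow> real" where
  "unserved M Theta K D r t = (\<integral>\<omega>. 1 - supp K D r t (Theta t \<omega>) / Dagg K D t \<partial>M)"

definition feasible_Ins where
  "feasible_Ins M T Theta K D V p cr \<xi> r \<pi> \<longleftrightarrow>
     r \<ge> 0 \<and> fIns M T Theta K D V p cr r \<pi> \<ge> \<xi> \<and>
     (\<forall>t\<in>T. \<forall>k\<in>{1..K}. \<forall>m\<in>{1..K}.
        \<pi> k t - \<pi> m t = (V k t - V m t) * unserved M Theta K D r t) \<and>
     (\<forall>t\<in>T. \<forall>k\<in>{1..K}.
        0 \<le> \<pi> k t \<and> \<pi> k t \<le> (V k t - p) * unserved M Theta K D r t)"

definition optimal_Ins where
  "optimal_Ins M T Theta K D V p cr \<xi> r \<pi> \<longleftrightarrow>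
     feasible_Ins M T Theta K D V p cr \<xi> r \<pi> \<and>
     (\<forall>r' \<pi>'. feasible_Ins M T Theta K D V p cr \<xi> r' \<pi>' \<longrightarrow> insObj T K D \<pi> \<le> insObj T K D \<pi>')"

definition feasible_NoIns where
  "feasible_NoIns M T Theta K D p cr \<xi> r \<longleftrightarrow> r \<ge> 0 \<and> fNo M T Theta K D p cr r \<ge> \<xi>"

definition optimal_NoIns where
  "optimal_NoIns M T Theta K D p cr \<xi> r \<longleftrightarrow>
     feasible_NoIns M T Theta K D p cr \<xi> r \<and>
     (\<forall>r'. feasible_NoIns M T Theta K D p cr \<xi> r' \<longrightarrow> r' \<le> r)"

end

theory Submission
  imports Defs
begin

definition Wt :: "nat \<Rightarrow> (nat \<Rightarrow> 't \<Rightarrow> real) \<Rightarrow> (nat \<Rightarrow> 't \<Rightarrow> real) \<Rightarrow> real \<Rightarrow> 't \<Rightarrow> real" where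
  "Wt K D V p t = (\<Sum>k=1..K. (V k t - p) * D k t)"

lemma Cs_eq: "Cs K D V p r t th = Wt K D V p t * (1 - supp K D r t th / Dagg K D t)"
proof -
  have "Cs K D V p r t th = (\<Sum>k=1..K. (V k t - p) * D k t * (1 - supp K D r t th / Dagg K D t))"
    unfolding Cs_def by (rule sum.cong) (simp_all add: right_diff_distrib mult.assoc)
  also have "\<dots> = Wt K D V p t * (1 - supp K D r t th / Dagg K D t)"
    unfolding Wt_def by (simp add: sum_distrib_right)
  finally show ?thesis .
qed

lemma int_Cs: "(\<integral>\<omega>. Cs K D V p r t (Theta t \<omega>) \<partial>M) = Wt K D V p t * unserved M Theta K D r t"
  by (simp add: Cs_eq unserved_def)

lemma insObj_le:
  assumes "\<And>k t. t \<in> T \<Longrightarrow> k \<in> {1..K} \<Longrightarrow> D k t \<ge> 0"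
    and "\<And>k t. t \<in> T \<Longrightarrow> k \<in> {1..K} \<Longrightarrow> \<pi> k t \<le> (V k t - p) * u t"
  shows "insObj T K D \<pi> \<le> (\<Sum>t\<in>T. Wt K D V p t * u t)"
proof -
  have "insObj T K D \<pi> \<le> (\<Sum>k=1..K. \<Sum>t\<in>T. (V k t - p) * u t * D k t)"
    unfolding insObj_def
    by (intro sum_mono mult_right_mono) (auto intro: assms)
  also have "\<dots> = (\<Sum>t\<in>T. Wt K D V p t * u t)"
    unfolding Wt_def by (subst sum.swap) (rule sum.cong, simp_all add: sum_distrib_left mult_ac)
  finally show ?thesis .
qed

theorem proposition2:
  fixes M :: "'a measure" and T :: "'t set" and Theta :: "'t \<Rightarrow> 'a \<Rightarrow> real"
    and K :: nat and D V :: "nat \<Rightarrow> 't \<Rightarrow> real" and p cr \<xi> rs rd :: real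
    and \<pi>s :: "nat \<Rightarrow> 't \<Rightarrow> real"
  assumes "prob_space M"
    and "finite T"
    and "K \<ge> 1"
    and "\<And>t. t \<in> T \<Longrightarrow> Theta t \<in> borel_measurable M"
    and "\<And>t. t \<in> T \<Longrightarrow> AE \<omega> in M. 0 \<le> Theta t \<omega> \<and> Theta t \<omega> \<le> 1"
    and "\<And>k t. t \<in> T \<Longrightarrow> k \<in> {1..K} \<Longrightarrow> D k t \<ge> 0"
    and "\<And>t. t \<in> T \<Longrightarrow> Dagg K D t > 0"
    and "\<And>k m t. t \<in> T \<Longrightarrow> 1 \<le> k \<Longrightarrow> k \<le> m \<Longrightarrow> m \<le> K \<Longrightarrow> V k t \<le> V m t"
    and "\<And>t. t \<in> T \<Longrightarrow> p \<le> V 1 t"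
    and "cr > 0"
    and "\<xi> \<ge> 0"
    and "optimal_Ins M T Theta K D V p cr \<xi> rs \<pi>s"
    and "optimal_NoIns M T Theta K D p cr \<xi> rd"
  shows "CSO M T Theta K D V p cr rs \<le> CSO M T Theta K D V p cr rd"
proof -
  interpret prob_space M by fact
  define S where "S r = (\<Sum>t\<in>T. p * (\<integral>\<omega>. supp K D r t (Theta t \<omega>) \<partial>M))" for r
  define EC where "EC r = (\<Sum>t\<in>T. Wt K D V p t * unserved M Theta K D r t)" for r
  have fNo_eq: "fNo M T Theta K D p cr r = S r - cr * r" for r
    unfolding fNo_def S_def by simp
  have fIns_eq: "fIns M T Theta K D V p cr r \<pi> = insObj T K D \<pi> + S r - cr * r - EC r" for r \<pi>
    unfolding fIns_def S_def EC_def int_Cs by simp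
  have CSO_eq: "CSO M T Theta K D V p cr r = cr * r + EC r" for r
    unfolding CSO_def EC_def int_Cs by simp
  have Vp: "V k t - p \<ge> 0" if "t \<in> T" "k \<in> {1..K}" for k t
    using assms(8)[of t 1 k] assms(9)[of t] that by auto
  have unn: "unserved M Theta K D r t \<ge> 0" if "t \<in> T" for r t
    unfolding unserved_def
  proof (rule integral_nonneg_AE, rule AE_I2)
    fix x
    have "supp K D r t (Theta t x) \<le> Dagg K D t" unfolding supp_def by simp
    then show "0 \<le> 1 - supp K D r t (Theta t x) / Dagg K D t"
      using assms(7)[OF that] by (simp add: field_simps)
  qed
  have fIns_le: "fIns M T Theta K D V p cr r \<pi> \<le> fNo M T Theta K D p cr r"
    if "feasible_Ins M T Theta K D V p cr \<xi> r \<pi>" for r \<pi>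
  proof -
    have "insObj T K D \<pi> \<le> EC r"
      unfolding EC_def
      by (rule insObj_le[where u="unserved M Theta K D r"]) (use that assms(6) in \<open>auto simp: feasible_Ins_def\<close>)
    then show ?thesis unfolding fIns_eq fNo_eq by simp
  qed
  have insfs: "feasible_Ins M T Theta K D V p cr \<xi> rs \<pi>s"
    using assms(12) unfolding optimal_Ins_def by simp
  have nofd: "feasible_NoIns M T Theta K D p cr \<xi> rd"
    using assms(13) unfolding optimal_NoIns_def by simp
  have rdmax: "r \<le> rd" if "feasible_NoIns M T Theta K D p cr \<xi> r" for r
    using assms(13) that unfolding optimal_NoIns_def by simp
  have rs0: "rs \<ge> 0" and fs: "fIns M T Theta K D V p cr rs \<pi>s \<ge> \<xi>"
    using insfs unfolding feasible_Ins_def by auto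
  have rsd: "rs \<le> rd"
    using fIns_le[OF insfs] fs rs0 by (intro rdmax) (auto simp: feasible_NoIns_def)
  define \<pi>m where "\<pi>m k t = (V k t - p) * unserved M Theta K D rd t" for k t
  have insObj_m: "insObj T K D \<pi>m = EC rd"
    unfolding insObj_def \<pi>m_def EC_def Wt_def
    by (subst sum.swap) (rule sum.cong, simp_all add: sum_distrib_left mult_ac)
  have feas_m: "feasible_Ins M T Theta K D V p cr \<xi> rd \<pi>m"
    unfolding feasible_Ins_def
  proof (intro conjI ballI)
    show "rd \<ge> 0" using nofd by (simp add: feasible_NoIns_def)
    show "fIns M T Theta K D V p cr rd \<pi>m \<ge> \<xi>"
      using nofd unfolding fIns_eq insObj_m feasible_NoIns_def fNo_eq by simp
  next
    fix t k m assume "t \<in> T" "k \<in> {1..K}" "m \<in> {1..K}"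
    show "\<pi>m k t - \<pi>m m t = (V k t - V m t) * unserved M Theta K D rd t"
      unfolding \<pi>m_def by (simp add: algebra_simps)
  next
    fix t k assume "t \<in> T" "k \<in> {1..K}"
    then show "0 \<le> \<pi>m k t" "\<pi>m k t \<le> (V k t - p) * unserved M Theta K D rd t"
      unfolding \<pi>m_def using Vp unn by auto
  qed
  have obj: "insObj T K D \<pi>s \<le> EC rd"
    using assms(12) feas_m insObj_m unfolding optimal_Ins_def by metis
  have key: "S rs - \<xi> \<le> cr * rd"
  proof (cases "p \<le> 0")
    case True
    have "S rs \<le> 0" unfolding S_def
    proof (rule sum_nonpos)
      fix t assume t: "t \<in> T"
      have "0 \<le> (\<integral>\<omega>. supp K D rs t (Theta t \<omega>) \<partial>M)"
      proof (rule integral_nonneg_AE)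
        show "AE x in M. 0 \<le> supp K D rs t (Theta t x)"
          using assms(5)[OF t] proof eventually_elim
          case (elim x) then show ?case
            using assms(7)[OF t] rs0 by (simp add: supp_def)
        qed
      qed
      then show "p * (\<integral>\<omega>. supp K D rs t (Theta t \<omega>) \<partial>M) \<le> 0"
        using True by (simp add: mult_nonpos_nonneg)
    qed
    moreover have "0 \<le> cr * rd" using assms(10) nofd by (simp add: feasible_NoIns_def)
    ultimately show ?thesis using assms(11) by linarith
  next
    case False
    have Smono: "S a \<le> S b" if "0 \<le> a" "a \<le> b" for a b
      unfolding S_def
    proof (rule sum_mono)
      fix t assume t: "t \<in> T"
      have int: "integrable M (\<lambda>\<omega>. supp K D r t (Theta t \<omega>))" if "r \<ge> 0" for r
      proof (rule integrable_const_bound[where B="Dagg K D t"])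
        show "AE x in M. norm (supp K D r t (Theta t x)) \<le> Dagg K D t"
          using assms(5)[OF t] proof eventually_elim
          case (elim x) then show ?case
            using assms(7)[OF t] that by (simp add: supp_def)
        qed
        show "(\<lambda>\<omega>. supp K D r t (Theta t \<omega>)) \<in> borel_measurable M"
          unfolding supp_def using assms(4)[OF t] by measurable
      qed
      have "(\<integral>\<omega>. supp K D a t (Theta t \<omega>) \<partial>M) \<le> (\<integral>\<omega>. supp K D b t (Theta t \<omega>) \<partial>M)"
      proof (rule integral_mono_AE[OF int int])
        show "AE x in M. supp K D a t (Theta t x) \<le> supp K D b t (Theta t x)"
          using assms(5)[OF t] proof eventually_elim
          case (elim x) then show ?case
            using that mult_right_mono[of a b "Theta t x"] by (simp add: supp_def min.coboundedI2)
        qed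
      qed (use that in auto)
      then show "p * (\<integral>\<omega>. supp K D a t (Theta t \<omega>) \<partial>M) \<le> p * (\<integral>\<omega>. supp K D b t (Theta t \<omega>) \<partial>M)"
        using False by (simp add: mult_left_mono)
    qed
    show ?thesis
    proof (rule ccontr)
      assume A: "\<not> ?thesis"
      define r' where "r' = (S rs - \<xi>) / cr"
      have r'gt: "r' > rd" unfolding r'_def using A assms(10) by (simp add: field_simps)
      have rd0: "rd \<ge> 0" using nofd by (simp add: feasible_NoIns_def)
      have "cr * r' = S rs - \<xi>" unfolding r'_def using assms(10) by simp
      moreover have "S rs \<le> S r'" using Smono[of rs r'] rs0 rsd r'gt by simp
      ultimately have "feasible_NoIns M T Theta K D p cr \<xi> r'"
        unfolding feasible_NoIns_def fNo_eq using r'gt rd0 by simp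
      then show False using rdmax r'gt by force
    qed
  qed
  have "cr * rs + EC rs \<le> insObj T K D \<pi>s + S rs - \<xi>"
    using fs unfolding fIns_eq by simp
  then show ?thesis unfolding CSO_eq using obj key by simp
qed

end
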